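(* Assume only upper-bound group constraints and $\mathcal S\neq\emptyset$. Let $\lambda:\mathcal U\to\mathbb R$. There exists a probability distribution $D$ over $\mathcal S$ with $D[u]\ge\lambda_u$ for all $u\in\mathcal U$ if and only if $$\max_{r\in\mathcal S}\sum_{u\in X}V(r,u)\ \ge\ \sum_{u\in X}\lambda_u\qquad\text{for all } X\subseteq\mathcal U.$$
   Context: Ranking setting: $\mathcal U=\{u_1,\dots,u_n\}$ finite set of individuals partitioned into groups $C_1,\dots,C_t$; rankings are bijections $r:\mathcal U\to[n]$. Only upper bounds: $\mathcal S=\{r:\ |\{u\in C_k: r(u)\le i\}|\le u_i^k\ \forall i\in[n],k\in[t]\}$ for given integers $u_i^k$. $V(r,u)=f(r(u))-g(u)$ with $f:[n]\to\mathbb R$ non-increasing and $g:\mathcal U\to\mathbb R$ arbitrary. For a distribution $D$ over $\mathcal S$, $D[u]=\mathbb E_{r\sim D}[V(r,u)]$. *)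

theory Defs
  imports "HOL-Probability.Probability"
begin

text \<open>Rankings of the finite set of individuals U: bijections U -> {1..card U},
  fixed to 0 outside U so that the set of rankings is finite.\<close>
definition rankings :: "'a set \<Rightarrow> ('a \<Rightarrow> nat) set" where
  "rankings U = {r. bij_betw r U {1..card U} \<and> (\<forall>u. u \<notin> U \<longrightarrow> r u = 0)}"

definition feasible :: "'a set \<Rightarrow> nat \<Rightarrow> (nat \<Rightarrow> 'a set) \<Rightarrow> (nat \<Rightarrow> nat \<Rightarrow> int) \<Rightarrow> ('a \<Rightarrow> nat) set" where
  "feasible U t C ub = {r \<in> rankings U.
     \<forall>i\<in>{1..card U}. \<forall>k\<in>{1..t}. int (card {u \<in> C k. r u \<le> i}) \<le> ub i k}"

definition util :: "(nat \<Rightarrow> real) \<Rightarrow> ('a \<Rightarrow> real) \<Rightarrow> ('a \<Rightarrow> nat) \<Rightarrow> 'a \<Rightarrow> real" where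
  "util f g r u = f (r u) - g u"

definition exp_util :: "(nat \<Rightarrow> real) \<Rightarrow> ('a \<Rightarrow> real) \<Rightarrow> ('a \<Rightarrow> nat) pmf \<Rightarrow> 'a \<Rightarrow> real" where
  "exp_util f g D u = measure_pmf.expectation D (\<lambda>r. util f g r u)"

end

theory Submission
  imports Defs "HOL-Library.List_Lexorder"
begin

lemma sum_list_concat_map_tr:
  assumes "\<forall>e\<in>set L. sum_list (map h (tr e)) = (h e :: real)"
  shows "sum_list (map h (concat (map tr L))) = sum_list (map h L)"
  using assms by (induction L) auto

lemma fm:
  fixes V :: "'v set" and A :: "(('v \<Rightarrow> real) \<times> real) set"
  assumes "finite V" "finite A" "\<not> (\<exists>x. \<forall>c\<in>A. snd c \<le> (\<Sum>v\<in>V. fst c v * x v))"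
  shows "\<exists>L. (\<forall>(y,c)\<in>set L. y \<ge> 0 \<and> c \<in> A) \<and> (\<forall>v\<in>V. (\<Sum>(y,c)\<leftarrow>L. y * fst c v) = 0)
           \<and> (\<Sum>(y,c)\<leftarrow>L. y * snd c) > 0"
  using assms
proof (induction V arbitrary: A rule: finite_induct)
  case empty
  then obtain c where c: "c \<in> A" "snd c > 0" by (auto simp: not_le)
  show ?case by (rule exI[of _ "[(1,c)]"]) (use c in auto)
next
  case (insert v0 V)
  define comb where "comb p n = ((\<lambda>v. (- fst n v0) * fst p v + fst p v0 * fst n v),
      (- fst n v0) * snd p + fst p v0 * snd n)" for p n :: "('v \<Rightarrow> real) \<times> real"
  define Z where "Z = {c\<in>A. fst c v0 = 0}"
  define P where "P = {c\<in>A. fst c v0 > 0}"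
  define N where "N = {c\<in>A. fst c v0 < 0}"
  define A' where "A' = Z \<union> (\<lambda>pn. comb (fst pn) (snd pn)) ` (P \<times> N)"
  have finA': "finite A'" unfolding A'_def Z_def P_def N_def using insert.prems(1) by auto
  have zeroA': "fst c v0 = 0" if "c \<in> A'" for c
    using that unfolding A'_def Z_def comb_def by (auto simp: algebra_simps)
  have infeas: "\<not> (\<exists>x. \<forall>c\<in>A'. snd c \<le> (\<Sum>v\<in>V. fst c v * x v))"
  proof
    assume "\<exists>x. \<forall>c\<in>A'. snd c \<le> (\<Sum>v\<in>V. fst c v * x v)"
    then obtain x where x: "\<forall>c\<in>A'. snd c \<le> (\<Sum>v\<in>V. fst c v * x v)" by blast
    define R where "R c = (\<Sum>v\<in>V. fst c v * x v)" for c :: "('v \<Rightarrow> real) \<times> real"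
    define lo where "lo p = (snd p - R p) / fst p v0" for p :: "('v \<Rightarrow> real) \<times> real"
    define hi where "hi p = (snd p - R p) / fst p v0" for p :: "('v \<Rightarrow> real) \<times> real"
    have Rcomb: "R (comb p n) = (- fst n v0) * R p + fst p v0 * R n" for p n
    proof -
      have "(\<Sum>v\<in>V. (a * F v + b * G v) * x v) = a * (\<Sum>v\<in>V. F v * x v) + b * (\<Sum>v\<in>V. G v * x v)"
        for a b :: real and F G :: "'v \<Rightarrow> real"
        by (simp add: distrib_right sum.distrib sum_distrib_left mult.assoc)
      from this[of "- fst n v0" "fst p" "fst p v0" "fst n"]
      show ?thesis unfolding R_def comb_def by simp
    qed
    have key: "lo p \<le> hi n" if p: "p \<in> P" and n: "n \<in> N" for p n
    proof -
      have cp: "fst p v0 > 0" and cn: "fst n v0 < 0" using p n by (auto simp: P_def N_def)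
      have "comb p n \<in> A'" unfolding A'_def using p n by force
      then have "snd (comb p n) \<le> R (comb p n)" using x R_def by auto
      then have ineq: "0 \<le> (- fst n v0) * (R p - snd p) + fst p v0 * (R n - snd n)"
        unfolding Rcomb by (simp add: comb_def algebra_simps)
      show ?thesis unfolding lo_def hi_def using cp cn ineq
        by (simp add: divide_simps) (simp add: algebra_simps)
    qed
    have finP: "finite P" and finN: "finite N" using insert.prems(1) by (auto simp: P_def N_def)
    define tt where "tt = (if P \<noteq> {} then Max (lo ` P) else if N \<noteq> {} then Min (hi ` N) else 0)"
    have tlo: "lo p \<le> tt" if "p \<in> P" for p
      using that finP by (auto simp: tt_def intro!: Max_ge)
    have thi: "tt \<le> hi n" if "n \<in> N" for n
    proof (cases "P = {}")
      case True then show ?thesis using that finN by (auto simp: tt_def intro!: Min_le)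
    next
      case False then show ?thesis using that finP key by (auto simp: tt_def Max_le_iff)
    qed
    define x' where "x' = x(v0 := tt)"
    have ev: "(\<Sum>v\<in>insert v0 V. fst c v * x' v) = fst c v0 * tt + R c" for c
    proof -
      have "(\<Sum>v\<in>insert v0 V. fst c v * x' v) = fst c v0 * tt + (\<Sum>v\<in>V. fst c v * x' v)"
        using insert.hyps by (simp add: x'_def)
      also have "(\<Sum>v\<in>V. fst c v * x' v) = R c"
        unfolding R_def x'_def using insert.hyps by (intro sum.cong) auto
      finally show ?thesis .
    qed
    have "\<forall>c\<in>A. snd c \<le> (\<Sum>v\<in>insert v0 V. fst c v * x' v)"
    proof
      fix c assume c: "c \<in> A"
      consider "fst c v0 = 0" | "fst c v0 > 0" | "fst c v0 < 0" by linarith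
      then show "snd c \<le> (\<Sum>v\<in>insert v0 V. fst c v * x' v)"
      proof cases
        case 1
        then have "c \<in> A'" using c by (auto simp: A'_def Z_def)
        then show ?thesis using x 1 by (simp add: ev R_def)
      next
        case 2
        then have "c \<in> P" using c by (auto simp: P_def)
        then have "lo c \<le> tt" by (rule tlo)
        then have "snd c - R c \<le> tt * fst c v0" using 2 by (simp add: lo_def pos_divide_le_eq)
        then show ?thesis unfolding ev by (simp add: mult.commute)
      next
        case 3
        then have "c \<in> N" using c by (auto simp: N_def)
        then have "tt \<le> hi c" by (rule thi)
        then have "snd c - R c \<le> tt * fst c v0" using 3 by (simp add: hi_def neg_le_divide_eq)
        then show ?thesis unfolding ev by (simp add: mult.commute)
      qed
    qed
    then show False using insert.prems(2) by blast
  qed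
  from insert.IH[OF finA' infeas] obtain L' where
    L'1: "\<forall>(y,c)\<in>set L'. y \<ge> 0 \<and> c \<in> A'" and
    L'2: "\<forall>v\<in>V. (\<Sum>(y,c)\<leftarrow>L'. y * fst c v) = 0" and
    L'3: "(\<Sum>(y,c)\<leftarrow>L'. y * snd c) > 0" by blast
  define pick where "pick c = (SOME pn. pn \<in> P \<times> N \<and> c = comb (fst pn) (snd pn))" for c
  define tr where "tr e = (if snd e \<in> A then [e] else
      [(fst e * (- fst (snd (pick (snd e))) v0), fst (pick (snd e))),
       (fst e * fst (fst (pick (snd e))) v0, snd (pick (snd e)))])" for e :: "real \<times> (('v \<Rightarrow> real) \<times> real)"
  have pickP: "pick c \<in> P \<times> N \<and> c = comb (fst (pick c)) (snd (pick c))" if "c \<in> A'" "c \<notin> A" for c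
  proof -
    have "\<exists>pn. pn \<in> P \<times> N \<and> c = comb (fst pn) (snd pn)"
      using that unfolding A'_def Z_def by blast
    then show ?thesis unfolding pick_def by (rule someI_ex)
  qed
  define L where "L = concat (map tr L')"
  have G: "sum_list (map (\<lambda>(y,c). y * G c) (tr e)) = (\<lambda>(y,c). y * G c) e"
    if e: "e \<in> set L'" and lin: "\<And>p n. G (comb p n) = (- fst n v0) * G p + fst p v0 * G n" for G e
  proof (cases "snd e \<in> A")
    case True then show ?thesis by (simp add: tr_def)
  next
    case False
    have "snd e \<in> A'" using e L'1 by auto
    from pickP[OF this False] have "snd e = comb (fst (pick (snd e))) (snd (pick (snd e)))" by blast
    then have "G (snd e) = (- fst (snd (pick (snd e))) v0) * G (fst (pick (snd e))) + fst (fst (pick (snd e))) v0 * G (snd (pick (snd e)))"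
      using lin by metis
    note eq = this
    have "(\<lambda>(y,c). y * G c) e = fst e * G (snd e)" by (simp add: split_beta)
    also have "\<dots> = fst e * ((- fst (snd (pick (snd e))) v0) * G (fst (pick (snd e))) + fst (fst (pick (snd e))) v0 * G (snd (pick (snd e))))"
      by (subst eq) (rule refl)
    finally show ?thesis using False by (simp add: tr_def split_beta algebra_simps)
  qed
  have sumL: "(\<Sum>(y,c)\<leftarrow>L. y * G c) = (\<Sum>(y,c)\<leftarrow>L'. y * G c)"
    if lin: "\<And>p n. G (comb p n) = (- fst n v0) * G p + fst p v0 * G n" for G
    unfolding L_def by (rule sum_list_concat_map_tr) (use G[OF _ lin] in blast)
  have L1: "\<forall>(y,c)\<in>set L. y \<ge> 0 \<and> c \<in> A"
  proof
    fix e assume "e \<in> set L"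
    then obtain e' where e': "e' \<in> set L'" "e \<in> set (tr e')" unfolding L_def by auto
    show "case e of (y,c) \<Rightarrow> y \<ge> 0 \<and> c \<in> A"
    proof (cases "snd e' \<in> A")
      case True then show ?thesis using e' L'1 by (auto simp: tr_def)
    next
      case False
      have "snd e' \<in> A'" "fst e' \<ge> 0" using e' L'1 by auto
      with pickP[OF this(1) False] show ?thesis using e' False
        by (auto simp: tr_def P_def N_def intro: mult_nonneg_nonneg) (metis less_imp_le mult_nonneg_nonpos)
    qed
  qed
  have L2: "\<forall>v\<in>insert v0 V. (\<Sum>(y,c)\<leftarrow>L. y * fst c v) = 0"
  proof
    fix v assume v: "v \<in> insert v0 V"
    have "(\<Sum>(y,c)\<leftarrow>L. y * fst c v) = (\<Sum>(y,c)\<leftarrow>L'. y * fst c v)"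
      by (rule sumL) (simp add: comb_def)
    also have "\<dots> = 0"
    proof (cases "v = v0")
      case True
      have "(\<Sum>(y,c)\<leftarrow>L'. y * fst c v) = (\<Sum>(y,c)\<leftarrow>L'. 0)"
        using L'1 zeroA' True by (intro arg_cong[where f=sum_list] map_cong) auto
      moreover have "(\<Sum>(y,c)\<leftarrow>L'. (0::real)) = 0" by (induction L') auto
      ultimately show ?thesis by simp
    next
      case False then show ?thesis using v L'2 by auto
    qed
    finally show "(\<Sum>(y,c)\<leftarrow>L. y * fst c v) = 0" .
  qed
  have L3: "(\<Sum>(y,c)\<leftarrow>L. y * snd c) > 0"
    using L'3 sumL[of snd] by (simp add: comb_def)
  show ?case using L1 L2 L3 by blast
qed


definition sw :: "('a \<Rightarrow> nat) \<Rightarrow> 'a \<Rightarrow> 'a \<Rightarrow> 'a \<Rightarrow> nat" where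
  "sw r x y = r(x := r y, y := r x)"

lemma sw_same[simp]: "sw r x x = r" by (auto simp: sw_def)

lemma sw_comm: "sw r x y = sw r y x" by (auto simp: sw_def fun_eq_iff)

lemma bij_sw:
  assumes "bij_betw r U N" "x \<in> U" "y \<in> U"
  shows "bij_betw (sw r x y) U N"
proof -
  define \<sigma> where "\<sigma> u = (if u = x then y else if u = y then x else u)" for u
  have b: "bij_betw \<sigma> U U"
    by (rule bij_betw_byWitness[where f'=\<sigma>]) (use assms in \<open>auto simp: \<sigma>_def\<close>)
  have "sw r x y = r \<circ> \<sigma>" by (auto simp: sw_def \<sigma>_def fun_eq_iff)
  then show ?thesis using bij_betw_trans[OF b assms(1)] by simp
qed

lemma rankings_sw:
  assumes "r \<in> rankings U" "x \<in> U" "y \<in> U"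
  shows "sw r x y \<in> rankings U"
  using assms bij_sw[of r U _ x y] unfolding rankings_def by (auto simp: sw_def)

lemma rank_range:
  assumes "r \<in> rankings U" "u \<in> U"
  shows "1 \<le> r u" "r u \<le> card U"
  using assms bij_betw_apply[of r U "{1..card U}" u] unfolding rankings_def by auto

lemma rank_out: "r \<in> rankings U \<Longrightarrow> u \<notin> U \<Longrightarrow> r u = 0"
  unfolding rankings_def by auto

lemma rank_inj: "r \<in> rankings U \<Longrightarrow> inj_on r U"
  unfolding rankings_def bij_betw_def by auto

lemma rank_surj: "r \<in> rankings U \<Longrightarrow> i \<in> {1..card U} \<Longrightarrow> \<exists>u\<in>U. r u = i"
proof -
  assume "r \<in> rankings U" "i \<in> {1..card U}"
  then have "i \<in> r ` U" unfolding rankings_def bij_betw_def by auto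
  then show ?thesis by auto
qed

lemma finite_rankings: "finite U \<Longrightarrow> finite (rankings U)"
proof -
  assume fin: "finite U"
  have "rankings U \<subseteq> {r. \<forall>x. (x \<in> U \<longrightarrow> r x \<in> {1..card U}) \<and> (x \<notin> U \<longrightarrow> r x = 0)}"
    unfolding rankings_def using bij_betw_apply by fastforce
  then show ?thesis using finite_set_of_finite_funs[OF fin, of "{1..card U}" 0] finite_subset by blast
qed

lemma cnt_same:
  assumes "x \<in> C \<longleftrightarrow> y \<in> C"
  shows "card {u\<in>C. sw r x y u \<le> i} = card {u\<in>C. r u \<le> i}"
proof -
  define \<sigma> where "\<sigma> u = (if u = x then y else if u = y then x else u)" for u
  have inj: "inj \<sigma>" unfolding inj_def \<sigma>_def by auto
  have "{u\<in>C. sw r x y u \<le> i} = \<sigma> ` {u\<in>C. r u \<le> i}"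
  proof (cases "x \<in> C")
    case True
    show ?thesis
    proof
      show "{u \<in> C. sw r x y u \<le> i} \<subseteq> \<sigma> ` {u \<in> C. r u \<le> i}"
      proof
        fix u assume u: "u \<in> {u \<in> C. sw r x y u \<le> i}"
        have "\<sigma> (\<sigma> u) = u" by (auto simp: \<sigma>_def)
        moreover have "\<sigma> u \<in> {u \<in> C. r u \<le> i}" using u True assms by (auto simp: \<sigma>_def sw_def split: if_splits)
        ultimately show "u \<in> \<sigma> ` {u \<in> C. r u \<le> i}" by (metis image_eqI)
      qed
      show "\<sigma> ` {u \<in> C. r u \<le> i} \<subseteq> {u \<in> C. sw r x y u \<le> i}"
        using True assms by (auto simp: \<sigma>_def sw_def)
    qed
  next
    case False
    then have "y \<notin> C" using assms by simp
    then have "\<sigma> ` {u\<in>C. r u \<le> i} = {u\<in>C. r u \<le> i}" using False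
      by (force simp: \<sigma>_def)
    then show ?thesis using False \<open>y \<notin> C\<close> by (auto simp: sw_def)
  qed
  then show ?thesis using inj by (simp add: card_image inj_on_subset)
qed

lemma cnt_cross:
  assumes "x \<in> C" "y \<notin> C" "finite C"
  shows "int (card {u\<in>C. sw r x y u \<le> i}) =
         int (card {u\<in>C. r u \<le> i}) - (if r x \<le> i then 1 else 0) + (if r y \<le> i then 1 else 0)"
proof -
  have xy: "x \<noteq> y" using assms by auto
  have e: "{u\<in>C. sw r x y u \<le> i} = ({u\<in>C. r u \<le> i} - {x}) \<union> (if r y \<le> i then {x} else {})"
    using assms xy by (auto simp: sw_def)
  have f: "finite {u\<in>C. r u \<le> i}" using assms by auto
  have p: "r x \<le> i \<Longrightarrow> card {u\<in>C. r u \<le> i} > 0" using f assms(1) card_gt_0_iff by blast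
  show ?thesis
    using f assms p unfolding e by (auto simp: card_Diff_singleton card_insert_if of_nat_diff)
qed


definition FF :: "(nat \<Rightarrow> real) \<Rightarrow> ('a \<Rightarrow> nat) \<Rightarrow> 'a set \<Rightarrow> real" where
  "FF f r X = (\<Sum>u\<in>X. f (r u))"

lemma take_order:
  assumes "distinct us" "m < length us" "y \<in> set us" "y \<notin> set (take m us)" "y \<in> set (take k us)"
  shows "us ! m \<in> set (take k us)"
proof -
  obtain j where j: "j < length (take k us)" "take k us ! j = y" using assms(5) by (auto simp: in_set_conv_nth)
  have jk: "j < k" "us ! j = y" using j by auto
  have "m \<le> j"
  proof (rule ccontr)
    assume "\<not> m \<le> j"
    then have "y \<in> set (take m us)" using jk j by (auto simp: in_set_conv_nth intro!: exI[of _ j])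
    then show False using assms(4) by simp
  qed
  then have "m < k" using jk by simp
  then show ?thesis using assms(2) by (auto simp: in_set_conv_nth intro!: exI[of _ m])
qed

lemma not_in_take: "distinct us \<Longrightarrow> m < length us \<Longrightarrow> us ! m \<notin> set (take m us)"
  by (auto simp: in_set_conv_nth nth_eq_iff_index_eq)

lemma abel:
  fixes w \<phi> :: "'a \<Rightarrow> real"
  assumes "distinct us" "sorted_wrt (\<lambda>a b. w b \<le> w a) us" "\<forall>u\<in>set us. 0 \<le> w u"
    "\<forall>k. 0 \<le> (\<Sum>u\<in>set (take k us). \<phi> u)"
  shows "0 \<le> (\<Sum>u\<in>set us. w u * \<phi> u)"
  using assms
proof (induction us arbitrary: w rule: rev_induct)
  case Nil then show ?case by simp
next
  case (snoc z xs)
  have zx: "z \<notin> set xs" and dxs: "distinct xs" using snoc.prems(1) by auto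
  have sxs: "sorted_wrt (\<lambda>a b. w b \<le> w a) xs" and wz: "\<forall>a\<in>set xs. w z \<le> w a"
    using snoc.prems(2) by (auto simp: sorted_wrt_append)
  define w' where "w' u = w u - w z" for u
  have "0 \<le> (\<Sum>u\<in>set xs. w' u * \<phi> u)"
  proof (rule snoc.IH[OF dxs])
    show "sorted_wrt (\<lambda>a b. w' b \<le> w' a) xs" using sxs by (simp add: w'_def)
    show "\<forall>u\<in>set xs. 0 \<le> w' u" using wz by (simp add: w'_def)
    show "\<forall>k. 0 \<le> (\<Sum>u\<in>set (take k xs). \<phi> u)"
    proof
      fix k
      have "take k xs = take (min k (length xs)) (xs @ [z])" by (simp add: min_def)
      then show "0 \<le> (\<Sum>u\<in>set (take k xs). \<phi> u)" using snoc.prems(4) by metis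
    qed
  qed
  moreover have "0 \<le> (\<Sum>u\<in>set xs. \<phi> u) + \<phi> z"
  proof -
    have "0 \<le> (\<Sum>u\<in>set (take (length (xs @ [z])) (xs @ [z])). \<phi> u)" using snoc.prems(4) by blast
    then show ?thesis using zx by (simp add: add.commute)
  qed
  moreover have "0 \<le> w z" using snoc.prems(3) by simp
  ultimately have "0 \<le> (\<Sum>u\<in>set xs. w' u * \<phi> u) + w z * ((\<Sum>u\<in>set xs. \<phi> u) + \<phi> z)"
    by simp
  also have "\<dots> = (\<Sum>u\<in>set (xs @ [z]). w u * \<phi> u)"
    using zx by (simp add: w'_def left_diff_distrib sum_subtractf sum_distrib_left distrib_left add.commute)
  finally show ?case .
qed

lemma lex_less:
  assumes "m < length us" "\<forall>u\<in>set (take m us). r u = rs u" "r (us!m) < rs (us!m)"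
  shows "map r us < map rs us"
proof -
  have "take m (map r us) = take m (map rs us)"
    using assms(2) by (simp add: take_map)
  then show ?thesis unfolding list_less_def lexord_take_index_conv
    using assms(1,3) by auto
qed

context
  fixes U :: "'a set" and t :: nat and C :: "nat \<Rightarrow> 'a set" and ub :: "nat \<Rightarrow> nat \<Rightarrow> int"
    and f :: "nat \<Rightarrow> real"
  assumes finU: "finite U"
    and cover: "(\<Union>k\<in>{1..t}. C k) = U"
    and disj: "\<forall>k\<in>{1..t}. \<forall>l\<in>{1..t}. k \<noteq> l \<longrightarrow> C k \<inter> C l = {}"
    and fmono: "\<forall>i j. 1 \<le> i \<longrightarrow> i \<le> j \<longrightarrow> j \<le> card U \<longrightarrow> f j \<le> f i"
begin

lemma group_of: "u \<in> U \<Longrightarrow> \<exists>k\<in>{1..t}. u \<in> C k"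
  using cover by auto

lemma group_unique: "k \<in> {1..t} \<Longrightarrow> l \<in> {1..t} \<Longrightarrow> u \<in> C k \<Longrightarrow> u \<in> C l \<Longrightarrow> k = l"
  using disj by blast

lemma C_sub: "k \<in> {1..t} \<Longrightarrow> C k \<subseteq> U"
  using cover by auto

lemma C_fin: "k \<in> {1..t} \<Longrightarrow> finite (C k)"
  using C_sub finU finite_subset by blast

lemma feasible_sw_same:
  assumes r: "r \<in> feasible U t C ub" and xy: "x \<in> U" "y \<in> U" and a: "a \<in> {1..t}" "x \<in> C a" "y \<in> C a"
  shows "sw r x y \<in> feasible U t C ub"
proof -
  have r0: "r \<in> rankings U" using r unfolding feasible_def by blast
  have r1: "sw r x y \<in> rankings U" using rankings_sw[OF r0 xy] .
  have "\<forall>i\<in>{1..card U}. \<forall>k\<in>{1..t}. int (card {u\<in>C k. sw r x y u \<le> i}) \<le> ub i k"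
  proof (intro ballI)
    fix i k assume i: "i \<in> {1..card U}" and k: "k \<in> {1..t}"
    have "x \<in> C k \<longleftrightarrow> y \<in> C k"
    proof
      assume "x \<in> C k" then have "k = a" using group_unique[OF k a(1)] a(2) by metis
      then show "y \<in> C k" using a(3) by simp
    next
      assume "y \<in> C k" then have "k = a" using group_unique[OF k a(1)] a(3) by metis
      then show "x \<in> C k" using a(2) by simp
    qed
    then have "card {u\<in>C k. sw r x y u \<le> i} = card {u\<in>C k. r u \<le> i}" by (rule cnt_same)
    moreover have "int (card {u\<in>C k. r u \<le> i}) \<le> ub i k" using r i k unfolding feasible_def by blast
    ultimately show "int (card {u\<in>C k. sw r x y u \<le> i}) \<le> ub i k" by simp
  qed
  then show ?thesis using r1 unfolding feasible_def by blast
qed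

lemma swap_dom:
  assumes fin: "finite X" and r: "r \<in> rankings U" and xy: "x \<in> U" "y \<in> U" and le: "r y \<le> r x"
    and ord: "y \<in> X \<longrightarrow> x \<in> X"
  shows "FF f r X \<le> FF f (sw r x y) X"
proof (cases "x = y")
  case True then show ?thesis by simp
next
  case False
  have fle: "f (r x) \<le> f (r y)"
    using fmono rank_range[OF r xy(1)] rank_range[OF r xy(2)] le by auto
  show ?thesis
  proof (cases "x \<in> X")
    case xX: True
    show ?thesis
    proof (cases "y \<in> X")
      case True
      have e1: "FF f g X = f (g x) + f (g y) + (\<Sum>u\<in>X - {x} - {y}. f (g u))" for g
      proof -
        have "FF f g X = f (g x) + (\<Sum>u\<in>X - {x}. f (g u))" unfolding FF_def by (rule sum.remove[OF fin xX])
        also have "(\<Sum>u\<in>X - {x}. f (g u)) = f (g y) + (\<Sum>u\<in>X - {x} - {y}. f (g u))"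
          by (rule sum.remove) (use fin True False in auto)
        finally show ?thesis by simp
      qed
      have "(\<Sum>u\<in>X - {x} - {y}. f (sw r x y u)) = (\<Sum>u\<in>X - {x} - {y}. f (r u))"
        by (rule sum.cong) (auto simp: sw_def)
      then show ?thesis using False by (simp add: e1 sw_def)
    next
      case yX: False
      have e1: "FF f g X = f (g x) + (\<Sum>u\<in>X - {x}. f (g u))" for g
        unfolding FF_def by (rule sum.remove[OF fin xX])
      have "(\<Sum>u\<in>X - {x}. f (sw r x y u)) = (\<Sum>u\<in>X - {x}. f (r u))"
        using yX by (intro sum.cong) (auto simp: sw_def)
      then show ?thesis using False fle by (simp add: e1 sw_def)
    qed
  next
    case False
    then have "y \<notin> X" using ord by blast
    then have "FF f (sw r x y) X = FF f r X" unfolding FF_def using \<open>x \<notin> X\<close>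
      by (intro sum.cong) (auto simp: sw_def)
    then show ?thesis by simp
  qed
qed


lemma step:
  assumes rs: "rs \<in> feasible U t C ub" and lexmin: "\<forall>r\<in>feasible U t C ub. map rs us \<le> map r us"
    and us: "distinct us" "set us = U" and m: "m < length us"
    and r: "r \<in> feasible U t C ub" and agree: "\<forall>u\<in>set (take m us). r u = rs u"
  shows "\<exists>r'\<in>feasible U t C ub. (\<forall>u\<in>set (take (Suc m) us). r' u = rs u) \<and>
            (\<forall>k. FF f r (set (take k us)) \<le> FF f r' (set (take k us)))"
proof -
  define S where "S = feasible U t C ub"
  define T where "T = set (take m us)"
  define x where "x = us ! m"
  have xU: "x \<in> U" using m us by (auto simp: x_def)
  have xT: "x \<notin> T" using not_in_take[OF us(1) m] by (simp add: T_def x_def)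
  have TU: "T \<subseteq> U" using us by (auto simp: T_def dest: in_set_takeD)
  have takeS: "set (take (Suc m) us) = insert x T"
    using m by (simp add: T_def x_def take_Suc_conv_app_nth)
  have lexle: "rs x \<le> r' x" if "r' \<in> S" "\<forall>u\<in>T. r' u = rs u" for r'
  proof (rule ccontr)
    assume "\<not> rs x \<le> r' x"
    then have "map r' us < map rs us" using lex_less[of m us r' rs] m that by (simp add: x_def T_def)
    moreover have "map rs us \<le> map r' us" using lexmin that by (simp add: S_def)
    ultimately show False by simp
  qed
  have r0: "r \<in> rankings U" using r unfolding feasible_def by blast
  have rs0: "rs \<in> rankings U" using rs unfolding feasible_def by blast
  obtain a where a: "a \<in> {1..t}" "x \<in> C a" using group_of[OF xU] by blast
  define Fr where "Fr = {u \<in> C a. u \<notin> T}"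
  have finFr: "finite Fr" using C_fin[OF a(1)] by (simp add: Fr_def)
  have xFr: "x \<in> Fr" using a xT by (simp add: Fr_def)
  have FrU: "Fr \<subseteq> U" using C_sub[OF a(1)] by (auto simp: Fr_def)
  obtain y where yFr: "y \<in> Fr" and ymin: "\<forall>u\<in>Fr. r y \<le> r u"
  proof -
    have ne: "r ` Fr \<noteq> {}" using xFr by blast
    have fin: "finite (r ` Fr)" using finFr by blast
    obtain y where y: "y \<in> Fr" "r y = Min (r ` Fr)" using Min_in[OF fin ne] by (metis imageE)
    have "\<forall>u\<in>Fr. r y \<le> r u" using y fin by simp
    then show ?thesis using that y(1) by blast
  qed
  have yU: "y \<in> U" using yFr FrU by blast
  have yT: "y \<notin> T" using yFr by (simp add: Fr_def)
  have ya: "y \<in> C a" using yFr by (simp add: Fr_def)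
  define r1 where "r1 = sw r x y"
  have r1S: "r1 \<in> S" unfolding r1_def S_def by (rule feasible_sw_same[OF r xU yU a ya])
  have r10: "r1 \<in> rankings U" using r1S unfolding S_def feasible_def by blast
  have r1agree: "\<forall>u\<in>T. r1 u = rs u" using agree xT yT by (auto simp: r1_def sw_def T_def)
  have ord: "v \<in> set (take k us) \<longrightarrow> x \<in> set (take k us)" if "v \<in> U" "v \<notin> T" for v k
    using take_order[OF us(1) m, of v k] that us(2) by (auto simp: x_def T_def)
  have dom1: "FF f r (set (take k us)) \<le> FF f r1 (set (take k us))" for k
    unfolding r1_def by (rule swap_dom[OF _ r0 xU yU]) (use ymin xFr ord[OF yU yT] in auto)
  have r1x: "r1 x = r y" by (simp add: r1_def sw_def)
  have r1y: "r1 y = r x" by (auto simp: r1_def sw_def)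
  have r1o: "r1 u = r u" if "u \<noteq> x" "u \<noteq> y" for u using that by (simp add: r1_def sw_def)
  have r1Fr: "r1 x \<le> r1 u" if "u \<in> Fr" for u
    using that ymin xFr r1x r1y r1o by (cases "u = x"; cases "u = y") auto
  have pq: "rs x \<le> r1 x" using lexle[OF r1S r1agree] .
  show ?thesis
  proof (cases "rs x = r1 x")
    case True
    then have "\<forall>u\<in>set (take (Suc m) us). r1 u = rs u" using r1agree takeS by auto
    then show ?thesis using r1S dom1 by (auto simp: S_def)
  next
    case False
    then have plq: "rs x < r1 x" using pq by simp
    define p where "p = rs x"
    define q where "q = r1 x"
    have p1: "1 \<le> p" "p \<le> card U" using rank_range[OF rs0 xU] by (auto simp: p_def)
    have qn: "q \<le> card U" using rank_range[OF r10 xU] by (simp add: q_def)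
    obtain z where zU: "z \<in> U" and r1z: "r1 z = p" using rank_surj[OF r10, of p] p1 by auto
    have zT: "z \<notin> T"
    proof
      assume "z \<in> T"
      then have "rs z = rs x" using r1agree r1z by (simp add: p_def)
      then have "z = x" using rank_inj[OF rs0] zU xU by (meson inj_onD)
      then show False using \<open>z \<in> T\<close> xT by simp
    qed
    have zx: "z \<noteq> x" using r1z plq by (auto simp: p_def)
    have za: "z \<notin> C a"
    proof
      assume "z \<in> C a"
      then have "z \<in> Fr" using zT by (simp add: Fr_def)
      then have "r1 x \<le> r1 z" by (rule r1Fr)
      then show False using r1z plq by (simp add: p_def)
    qed
    define r2 where "r2 = sw r1 x z"
    have r20: "r2 \<in> rankings U" unfolding r2_def by (rule rankings_sw[OF r10 xU zU])
    have r2x: "r2 x = p" by (simp add: r2_def sw_def r1z)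
    have r2z: "r2 z = q" using zx by (simp add: r2_def sw_def q_def)
    have r2feas: "int (card {u\<in>C k. r2 u \<le> i}) \<le> ub i k" if i: "i \<in> {1..card U}" and k: "k \<in> {1..t}" for i k
    proof -
      have old: "int (card {u\<in>C k. r1 u \<le> i}) \<le> ub i k" using r1S i k unfolding S_def feasible_def by blast
      consider "x \<in> C k \<longleftrightarrow> z \<in> C k" | "x \<in> C k" "z \<notin> C k" | "z \<in> C k" "x \<notin> C k" by blast
      then show ?thesis
      proof cases
        case 1
        then show ?thesis using old cnt_same[OF 1, of r1 i] by (simp add: r2_def)
      next
        case 2
        have ka: "k = a" using group_unique[OF k a(1)] 2(1) a(2) by metis
        have e: "int (card {u\<in>C k. r2 u \<le> i}) =
           int (card {u\<in>C k. r1 u \<le> i}) - (if q \<le> i then 1 else 0) + (if p \<le> i then 1 else 0)"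
          unfolding r2_def using cnt_cross[OF 2 C_fin[OF k], of r1 i] r1z by (simp add: q_def)
        show ?thesis
        proof (cases "p \<le> i \<and> i < q")
          case False then show ?thesis using e old plq by (auto simp: p_def q_def)
        next
          case True
          have sub: "{u\<in>C k. r1 u \<le> i} \<subseteq> {u\<in>C k. rs u \<le> i} - {x}"
          proof
            fix u assume u: "u \<in> {u\<in>C k. r1 u \<le> i}"
            have "u \<in> T"
            proof (rule ccontr)
              assume "u \<notin> T"
              then have "u \<in> Fr" using u ka by (simp add: Fr_def)
              then have "q \<le> r1 u" using r1Fr by (simp add: q_def)
              then show False using u True by simp
            qed
            then show "u \<in> {u\<in>C k. rs u \<le> i} - {x}" using u r1agree xT by auto
          qed
          have finB: "finite {u\<in>C k. rs u \<le> i}" using C_fin[OF k] by simp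
          have xB: "x \<in> {u\<in>C k. rs u \<le> i}" using True ka a(2) by (simp add: p_def)
          have "card {u\<in>C k. r1 u \<le> i} \<le> card ({u\<in>C k. rs u \<le> i} - {x})"
            by (rule card_mono) (use finB sub in auto)
          also have "\<dots> = card {u\<in>C k. rs u \<le> i} - 1" using finB xB by simp
          finally have c0: "card {u\<in>C k. r1 u \<le> i} \<le> card {u\<in>C k. rs u \<le> i} - 1" .
          have pos: "card {u\<in>C k. rs u \<le> i} > 0" using finB xB card_gt_0_iff by blast
          have "card {u\<in>C k. r1 u \<le> i} + 1 \<le> card {u\<in>C k. rs u \<le> i}" using c0 pos by linarith
          then have c: "int (card {u\<in>C k. r1 u \<le> i}) + 1 \<le> int (card {u\<in>C k. rs u \<le> i})" by linarith
          have "int (card {u\<in>C k. rs u \<le> i}) \<le> ub i k" using rs i k unfolding feasible_def by blast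
          then show ?thesis using e c True by simp
        qed
      next
        case 3
        have e: "int (card {u\<in>C k. r2 u \<le> i}) =
           int (card {u\<in>C k. r1 u \<le> i}) - (if p \<le> i then 1 else 0) + (if q \<le> i then 1 else 0)"
          unfolding r2_def sw_comm[of r1 x z] using cnt_cross[OF 3 C_fin[OF k], of r1 i] r1z by (simp add: q_def)
        show ?thesis using e old plq by (auto simp: p_def q_def)
      qed
    qed
    have r2S: "r2 \<in> S" using r20 r2feas unfolding S_def feasible_def by blast
    have r2agree: "\<forall>u\<in>set (take (Suc m) us). r2 u = rs u"
      using r1agree takeS r2x xT zT zx by (auto simp: r2_def sw_def p_def)
    have dom2: "FF f r1 (set (take k us)) \<le> FF f r2 (set (take k us))" for k
      unfolding r2_def by (rule swap_dom[OF _ r10 xU zU]) (use r1z plq ord[OF zU zT] in \<open>auto simp: p_def\<close>)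
    show ?thesis using r2S r2agree dom1 dom2 order_trans by (metis S_def)
  qed
qed

lemma finite_S: "finite (feasible U t C ub)"
  using finite_rankings[OF finU] unfolding feasible_def by (rule finite_subset[rotated]) auto

lemma reach:
  assumes rs: "rs \<in> feasible U t C ub" and lexmin: "\<forall>r\<in>feasible U t C ub. map rs us \<le> map r us"
    and us: "distinct us" "set us = U" and r: "r \<in> feasible U t C ub"
  shows "m \<le> length us \<Longrightarrow> \<exists>r'\<in>feasible U t C ub. (\<forall>u\<in>set (take m us). r' u = rs u) \<and>
            (\<forall>k. FF f r (set (take k us)) \<le> FF f r' (set (take k us)))"
proof (induction m)
  case 0 then show ?case using r by auto
next
  case (Suc m)
  then obtain r' where r': "r' \<in> feasible U t C ub" "\<forall>u\<in>set (take m us). r' u = rs u"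
    "\<forall>k. FF f r (set (take k us)) \<le> FF f r' (set (take k us))" by auto
  from step[OF rs lexmin us _ r'(1,2)] Suc.prems obtain r'' where
    "r'' \<in> feasible U t C ub" "\<forall>u\<in>set (take (Suc m) us). r'' u = rs u"
    "\<forall>k. FF f r' (set (take k us)) \<le> FF f r'' (set (take k us))" by auto
  then show ?case using r'(3) order_trans by blast
qed

lemma universal:
  assumes ne: "feasible U t C ub \<noteq> {}" and us: "distinct us" "set us = U"
  shows "\<exists>rs\<in>feasible U t C ub. \<forall>r\<in>feasible U t C ub. \<forall>k.
           FF f r (set (take k us)) \<le> FF f rs (set (take k us))"
proof -
  define S where "S = feasible U t C ub"
  define M where "M = (\<lambda>r. map r us) ` S"
  have finM: "finite M" using finite_S by (simp add: M_def S_def)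
  have neM: "M \<noteq> {}" using ne by (simp add: M_def S_def)
  obtain rs where rs: "rs \<in> S" "map rs us = Min M" using Min_in[OF finM neM] by (auto simp: M_def)
  have lexmin: "\<forall>r\<in>S. map rs us \<le> map r us"
  proof
    fix r assume "r \<in> S"
    then have "map r us \<in> M" unfolding M_def by (rule imageI)
    then show "map rs us \<le> map r us" using rs(2) Min_le[OF finM] by simp
  qed
  have "\<forall>r\<in>S. \<forall>k. FF f r (set (take k us)) \<le> FF f rs (set (take k us))"
  proof (intro ballI allI)
    fix r k assume r: "r \<in> S"
    from reach[OF rs(1)[unfolded S_def] lexmin[unfolded S_def] us r[unfolded S_def] order_refl]
    obtain r' where r': "r' \<in> S" "\<forall>u\<in>set us. r' u = rs u"
      "\<forall>k. FF f r (set (take k us)) \<le> FF f r' (set (take k us))" by (auto simp: S_def)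
    have "r' = rs"
    proof
      fix u show "r' u = rs u"
      proof (cases "u \<in> U")
        case True then show ?thesis using r'(2) us by auto
      next
        case False
        have "r' \<in> rankings U" "rs \<in> rankings U" using r'(1) rs(1) by (auto simp: S_def feasible_def)
        then show ?thesis using rank_out False by metis
      qed
    qed
    then show "FF f r (set (take k us)) \<le> FF f rs (set (take k us))" using r'(3) by simp
  qed
  then show ?thesis using rs by (auto simp: S_def)
qed

lemma greedy:
  fixes g lam w :: "'a \<Rightarrow> real"
  assumes ne: "feasible U t C ub \<noteq> {}"
    and H: "\<forall>X\<subseteq>U. Max ((\<lambda>r. \<Sum>u\<in>X. util f g r u) ` feasible U t C ub) \<ge> (\<Sum>u\<in>X. lam u)"
    and w: "\<forall>u\<in>U. 0 \<le> w u"
  shows "\<exists>r\<in>feasible U t C ub. 0 \<le> (\<Sum>u\<in>U. w u * (util f g r u - lam u))"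
proof -
  define S where "S = feasible U t C ub"
  obtain xs where xs: "distinct xs" "set xs = U" using finite_distinct_list[OF finU] by blast
  define us where "us = sort_key (\<lambda>u. - w u) xs"
  have us: "distinct us" "set us = U" using xs by (auto simp: us_def)
  have sus: "sorted_wrt (\<lambda>a b. w b \<le> w a) us"
  proof -
    have "sorted (map (\<lambda>u. - w u) us)" unfolding us_def by (rule sorted_sort_key)
    then show ?thesis by (simp add: sorted_map)
  qed
  obtain rs where rs: "rs \<in> S" and univ: "\<forall>r\<in>S. \<forall>k. FF f r (set (take k us)) \<le> FF f rs (set (take k us))"
    using universal[OF ne us] by (auto simp: S_def)
  have pre: "\<forall>k. 0 \<le> (\<Sum>u\<in>set (take k us). util f g rs u - lam u)"
  proof
    fix k
    define X where "X = set (take k us)"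
    have XU: "X \<subseteq> U" using us by (auto simp: X_def dest: in_set_takeD)
    have finI: "finite ((\<lambda>r. \<Sum>u\<in>X. util f g r u) ` S)" using finite_S by (simp add: S_def)
    have neI: "(\<lambda>r. \<Sum>u\<in>X. util f g r u) ` S \<noteq> {}" using ne by (simp add: S_def)
    obtain r0 where r0: "r0 \<in> S" "Max ((\<lambda>r. \<Sum>u\<in>X. util f g r u) ` S) = (\<Sum>u\<in>X. util f g r0 u)"
      using Min_in Max_in[OF finI neI] by auto
    have "(\<Sum>u\<in>X. lam u) \<le> (\<Sum>u\<in>X. util f g r0 u)" using H XU r0(2) by (auto simp: S_def)
    also have "\<dots> = FF f r0 X - (\<Sum>u\<in>X. g u)" by (simp add: util_def FF_def sum_subtractf)
    also have "\<dots> \<le> FF f rs X - (\<Sum>u\<in>X. g u)" using univ r0(1) by (simp add: X_def)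
    also have "\<dots> = (\<Sum>u\<in>X. util f g rs u)" by (simp add: util_def FF_def sum_subtractf)
    finally show "0 \<le> (\<Sum>u\<in>set (take k us). util f g rs u - lam u)"
      by (simp add: X_def sum_subtractf)
  qed
  have "0 \<le> (\<Sum>u\<in>set us. w u * (util f g rs u - lam u))"
    by (rule abel[OF us(1) sus _ pre]) (use w us in auto)
  then show ?thesis using rs us by (auto simp: S_def)
qed

end


lemma list_weights:
  fixes y :: "'e \<Rightarrow> real"
  assumes "\<forall>e\<in>set L. P e \<longrightarrow> h e \<in> U" "finite U"
  shows "(\<Sum>u\<in>U. (\<Sum>e\<leftarrow>L. if P e \<and> h e = u then y e else 0) * \<psi> u) =
         (\<Sum>e\<leftarrow>L. if P e then y e * \<psi> (h e) else 0)"
  using assms(1)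
proof (induction L)
  case Nil then show ?case by simp
next
  case (Cons e L)
  have "(\<Sum>u\<in>U. (\<Sum>e'\<leftarrow>e # L. if P e' \<and> h e' = u then y e' else 0) * \<psi> u) =
        (\<Sum>u\<in>U. (if P e \<and> h e = u then y e else 0) * \<psi> u) +
        (\<Sum>u\<in>U. (\<Sum>e'\<leftarrow>L. if P e' \<and> h e' = u then y e' else 0) * \<psi> u)"
    by (simp add: distrib_right sum.distrib)
  also have "(\<Sum>u\<in>U. (if P e \<and> h e = u then y e else 0) * \<psi> u) = (if P e then y e * \<psi> (h e) else 0)"
  proof (cases "P e")
    case True
    then have "h e \<in> U" using Cons.prems by simp
    then show ?thesis using True assms(2) by (simp add: if_distrib[where f="\<lambda>z. z * _"] sum.delta cong: if_cong)
  next
    case False then show ?thesis by simp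
  qed
  finally show ?case using Cons by simp
qed

theorem lemma2:
  fixes U :: "'a set" and t :: nat and C :: "nat \<Rightarrow> 'a set"
    and ub :: "nat \<Rightarrow> nat \<Rightarrow> int"
    and f :: "nat \<Rightarrow> real" and g :: "'a \<Rightarrow> real" and lam :: "'a \<Rightarrow> real"
  assumes finU: "finite U"
    and part_cover: "(\<Union>k\<in>{1..t}. C k) = U"
    and part_disj: "\<forall>k\<in>{1..t}. \<forall>l\<in>{1..t}. k \<noteq> l \<longrightarrow> C k \<inter> C l = {}"
    and f_mono: "\<forall>i j. 1 \<le> i \<longrightarrow> i \<le> j \<longrightarrow> j \<le> card U \<longrightarrow> f j \<le> f i"
    and S_ne: "feasible U t C ub \<noteq> {}"
  shows "(\<exists>D :: ('a \<Rightarrow> nat) pmf. set_pmf D \<subseteq> feasible U t C ub \<and>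
            (\<forall>u\<in>U. exp_util f g D u \<ge> lam u))
     \<longleftrightarrow> (\<forall>X\<subseteq>U. Max ((\<lambda>r. \<Sum>u\<in>X. util f g r u) ` feasible U t C ub) \<ge> (\<Sum>u\<in>X. lam u))"
proof -
  define S where "S = feasible U t C ub"
  have finS: "finite S" unfolding S_def by (rule finite_S[OF finU part_cover part_disj f_mono])
  show ?thesis
  proof
    assume "\<exists>D :: ('a \<Rightarrow> nat) pmf. set_pmf D \<subseteq> feasible U t C ub \<and> (\<forall>u\<in>U. exp_util f g D u \<ge> lam u)"
    then obtain D :: "('a \<Rightarrow> nat) pmf" where D: "set_pmf D \<subseteq> S" "\<forall>u\<in>U. exp_util f g D u \<ge> lam u"
      by (auto simp: S_def)
    have eu: "exp_util f g D u = (\<Sum>r\<in>S. util f g r u * pmf D r)" for u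
      unfolding exp_util_def by (rule integral_measure_pmf_real) (use finS D(1) in auto)
    show "\<forall>X\<subseteq>U. Max ((\<lambda>r. \<Sum>u\<in>X. util f g r u) ` feasible U t C ub) \<ge> (\<Sum>u\<in>X. lam u)"
    proof (intro allI impI)
      fix X assume XU: "X \<subseteq> U"
      define M where "M = Max ((\<lambda>r. \<Sum>u\<in>X. util f g r u) ` S)"
      have Mge: "(\<Sum>u\<in>X. util f g r u) \<le> M" if "r \<in> S" for r
        unfolding M_def using finS that by (intro Max_ge) auto
      have "(\<Sum>u\<in>X. lam u) \<le> (\<Sum>u\<in>X. exp_util f g D u)"
        using D(2) XU by (intro sum_mono) auto
      also have "\<dots> = (\<Sum>r\<in>S. pmf D r * (\<Sum>u\<in>X. util f g r u))"
        unfolding eu by (subst sum.swap) (simp add: sum_distrib_left mult.commute)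
      also have "\<dots> \<le> (\<Sum>r\<in>S. pmf D r * M)"
        by (intro sum_mono mult_left_mono Mge) auto
      also have "\<dots> = M" using sum_pmf_eq_1[OF finS D(1)] by (simp add: sum_distrib_right[symmetric])
      finally show "Max ((\<lambda>r. \<Sum>u\<in>X. util f g r u) ` feasible U t C ub) \<ge> (\<Sum>u\<in>X. lam u)"
        by (simp add: M_def S_def)
    qed
  next
    assume H: "\<forall>X\<subseteq>U. Max ((\<lambda>r. \<Sum>u\<in>X. util f g r u) ` feasible U t C ub) \<ge> (\<Sum>u\<in>X. lam u)"
    define cu where "cu u = ((\<lambda>r. util f g r u - lam u), (0::real))" for u
    define ci where "ci r = ((\<lambda>v. if v = r then (1::real) else 0), (0::real))" for r :: "'a \<Rightarrow> nat"
    define c1 where "c1 = ((\<lambda>v::'a\<Rightarrow>nat. (1::real)), (1::real))"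
    define A where "A = ci ` S \<union> {c1} \<union> cu ` U"
    have finA: "finite A" using finS finU by (simp add: A_def)
    have "\<exists>x. \<forall>c\<in>A. snd c \<le> (\<Sum>v\<in>S. fst c v * x v)"
    proof (rule ccontr)
      assume nf: "\<not> (\<exists>x. \<forall>c\<in>A. snd c \<le> (\<Sum>v\<in>S. fst c v * x v))"
      from fm[OF finS finA nf] obtain L where
        L1: "\<forall>(y,c)\<in>set L. y \<ge> 0 \<and> c \<in> A" and
        L2: "\<forall>v\<in>S. (\<Sum>(y,c)\<leftarrow>L. y * fst c v) = 0" and
        L3: "(\<Sum>(y,c)\<leftarrow>L. y * snd c) > 0" by blast
      define P where "P e = (snd e \<in> cu ` U)" for e :: "real \<times> (('a \<Rightarrow> nat) \<Rightarrow> real) \<times> real"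
      define uc where "uc e = (SOME u. u \<in> U \<and> snd e = cu u)" for e :: "real \<times> (('a \<Rightarrow> nat) \<Rightarrow> real) \<times> real"
      have ucP: "uc e \<in> U \<and> snd e = cu (uc e)" if "P e" for e
      proof -
        have "\<exists>u. u \<in> U \<and> snd e = cu u" using that by (auto simp: P_def)
        then show ?thesis unfolding uc_def by (rule someI_ex)
      qed
      define \<psi> where "\<psi> r u = util f g r u - lam u" for r u
      define w where "w u = (\<Sum>e\<leftarrow>L. if P e \<and> uc e = u then fst e else 0)" for u
      have wnn: "\<forall>u\<in>U. 0 \<le> w u"
      proof -
        have "\<forall>e\<in>set L. 0 \<le> fst e" using L1 by auto
        then show ?thesis unfolding w_def by (auto intro!: sum_list_nonneg)
      qed
      obtain r where r: "r \<in> S" and rpos: "0 \<le> (\<Sum>u\<in>U. w u * \<psi> r u)"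
        using greedy[OF finU part_cover part_disj f_mono S_ne H wnn] by (auto simp: S_def \<psi>_def)
      have Q: "(\<Sum>u\<in>U. w u * \<psi> r u) = (\<Sum>e\<leftarrow>L. if P e then fst e * \<psi> r (uc e) else 0)"
        unfolding w_def by (rule list_weights) (use ucP finU in auto)
      have each: "fst e * snd (snd e) + (if P e then fst e * \<psi> r (uc e) else 0) \<le> fst e * fst (snd e) r"
        if e: "e \<in> set L" for e
      proof -
        have y0: "fst e \<ge> 0" and cA: "snd e \<in> A" using L1 e by auto
        show ?thesis
        proof (cases "P e")
          case True
          then have "snd e = cu (uc e)" using ucP by blast
          then show ?thesis using True by (simp add: cu_def \<psi>_def)
        next
          case False
          then have "snd e \<in> ci ` S \<or> snd e = c1" using cA by (auto simp: A_def P_def)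
          then show ?thesis using False y0 by (auto simp: ci_def c1_def)
        qed
      qed
      have "(\<Sum>e\<leftarrow>L. fst e * snd (snd e) + (if P e then fst e * \<psi> r (uc e) else 0)) \<le>
            (\<Sum>e\<leftarrow>L. fst e * fst (snd e) r)"
        by (rule sum_list_mono) (rule each)
      also have "\<dots> = 0" using L2 r by (simp add: case_prod_unfold)
      finally have "(\<Sum>e\<leftarrow>L. fst e * snd (snd e)) + (\<Sum>u\<in>U. w u * \<psi> r u) \<le> 0"
        by (simp add: sum_list_addf Q)
      moreover have "(\<Sum>e\<leftarrow>L. fst e * snd (snd e)) > 0" using L3 by (simp add: case_prod_unfold)
      ultimately show False using rpos by linarith
    qed
    then obtain x where x: "\<forall>c\<in>A. snd c \<le> (\<Sum>v\<in>S. fst c v * x v)" by blast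
    have xr: "0 \<le> x r" if "r \<in> S" for r
    proof -
      have "ci r \<in> A" using that by (simp add: A_def)
      then have "0 \<le> (\<Sum>v\<in>S. (if v = r then 1 else 0) * x v)" using x by (auto simp: ci_def)
      also have "\<dots> = x r" using that finS by (simp add: if_distrib[where f="\<lambda>z. z * _"] cong: if_cong)
      finally show ?thesis .
    qed
    have sx: "1 \<le> (\<Sum>v\<in>S. x v)" using x by (auto simp: A_def c1_def)
    have xu: "0 \<le> (\<Sum>r\<in>S. (util f g r u - lam u) * x r)" if "u \<in> U" for u
    proof -
      have "cu u \<in> A" using that by (simp add: A_def)
      from bspec[OF x this] show ?thesis by (simp add: cu_def)
    qed
    define s where "s = (\<Sum>v\<in>S. x v)"
    have s0: "s > 0" using sx by (simp add: s_def)
    define p where "p r = (if r \<in> S then x r / s else 0)" for r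
    have pnn: "\<And>r. 0 \<le> p r" using xr s0 by (simp add: p_def)
    have psum: "(\<Sum>r\<in>S. p r) = 1" using s0 by (simp add: p_def s_def sum_divide_distrib[symmetric])
    have prob: "(\<integral>\<^sup>+r. ennreal (p r) \<partial>count_space UNIV) = 1"
    proof -
      have "(\<integral>\<^sup>+r. ennreal (p r) \<partial>count_space UNIV) = (\<Sum>r\<in>S. ennreal (p r))"
        by (rule nn_integral_count_space') (use finS in \<open>auto simp: p_def\<close>)
      also have "\<dots> = ennreal (\<Sum>r\<in>S. p r)" using pnn by simp
      finally show ?thesis using psum by simp
    qed
    define D where "D = embed_pmf p"
    have pmfD: "pmf D r = p r" for r unfolding D_def by (rule pmf_embed_pmf[OF pnn prob])
    have setD0: "set_pmf D = {r. p r \<noteq> 0}" unfolding D_def by (rule set_embed_pmf[OF pnn prob])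
    have setD: "set_pmf D \<subseteq> S" unfolding setD0 by (auto simp: p_def split: if_splits)
    have "\<forall>u\<in>U. exp_util f g D u \<ge> lam u"
    proof
      fix u assume u: "u \<in> U"
      have "exp_util f g D u = (\<Sum>r\<in>S. util f g r u * pmf D r)"
        unfolding exp_util_def by (rule integral_measure_pmf_real) (use finS setD in auto)
      also have "\<dots> = (\<Sum>r\<in>S. util f g r u * x r) / s"
        by (simp add: pmfD p_def sum_divide_distrib)
      finally have e: "exp_util f g D u = (\<Sum>r\<in>S. util f g r u * x r) / s" .
      have "lam u * s \<le> (\<Sum>r\<in>S. util f g r u * x r)"
      proof -
        have "(\<Sum>r\<in>S. (util f g r u - lam u) * x r) = (\<Sum>r\<in>S. util f g r u * x r) - lam u * s"
          by (simp add: s_def sum_distrib_left left_diff_distrib sum_subtractf)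
        then show ?thesis using xu[OF u] by linarith
      qed
      then show "exp_util f g D u \<ge> lam u" unfolding e using s0 by (simp add: pos_le_divide_eq)
    qed
    then show "\<exists>D :: ('a \<Rightarrow> nat) pmf. set_pmf D \<subseteq> feasible U t C ub \<and> (\<forall>u\<in>U. exp_util f g D u \<ge> lam u)"
      using setD by (auto simp: S_def)
  qed
qed

end
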